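(* Let $F:[0,1]^d\to[0,1]^d$ be a discrete time regulatory network with parameters $K,T,s,a$ as in the context, let $\Lambda$ be its limit set and $\Delta$ its discontinuity set. If $\operatorname{dist}(\Lambda,\Delta)>0$, then $\Lambda$ is finite.
   Context: $K\in[0,1]^{d\times d}$ with $\sum_iK_{i,j}=1$ for each $j$; $s\in\{-1,0,1\}^{d\times d}$ and $T\in[0,1]^{d\times d}$ with $s_{i,j}=0$ iff $K_{i,j}=0$ and $T_{i,j}=0$ iff $K_{i,j}=0$; $a\in[0,1]$; $H(x)=0$ for $x\le0$, $H(x)=1$ for $x>0$; $F(x)_j=ax_j+(1-a)\sum_iK_{i,j}H(s_{i,j}(x_i-T_{i,j}))$. The limit set $\Lambda$ is the set of $x\in[0,1]^d$ for which there exist $y\in[0,1]^d$ and times $t_1<t_2<\cdots$ with $\lim_{n\to\infty}F^{t_n}(y)=x$. The discontinuity set is $\Delta=\{x\in[0,1]^d:\ \exists\, i,k\in\{1,\dots,d\}\text{ with } x_i=T_{i,k}\}$. *)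

theory Defs
  imports "HOL-Analysis.Analysis"
begin

definition heav :: "real \<Rightarrow> real" where
  "heav x = (if x \<le> 0 then 0 else 1)"

definition unit_cube :: "(real ^ 'd) set" where
  "unit_cube = {x. \<forall>i. 0 \<le> x $ i \<and> x $ i \<le> 1}"

definition drn_map :: "('d::finite \<Rightarrow> 'd \<Rightarrow> real) \<Rightarrow> ('d \<Rightarrow> 'd \<Rightarrow> int) \<Rightarrow>
    ('d \<Rightarrow> 'd \<Rightarrow> real) \<Rightarrow> real \<Rightarrow> real ^ 'd \<Rightarrow> real ^ 'd" where
  "drn_map K s T a x = (\<chi> j. a * x $ j
      + (1 - a) * (\<Sum>i\<in>UNIV. K i j * heav (of_int (s i j) * (x $ i - T i j))))"

definition valid_params :: "('d::finite \<Rightarrow> 'd \<Rightarrow> real) \<Rightarrow> ('d \<Rightarrow> 'd \<Rightarrow> int) \<Rightarrow>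
    ('d \<Rightarrow> 'd \<Rightarrow> real) \<Rightarrow> real \<Rightarrow> bool" where
  "valid_params K s T a \<longleftrightarrow>
     (\<forall>i j. 0 \<le> K i j \<and> K i j \<le> 1) \<and> (\<forall>j. (\<Sum>i\<in>UNIV. K i j) = 1) \<and>
     (\<forall>i j. s i j \<in> {-1, 0, 1}) \<and> (\<forall>i j. 0 \<le> T i j \<and> T i j \<le> 1) \<and>
     (\<forall>i j. s i j = 0 \<longleftrightarrow> K i j = 0) \<and> (\<forall>i j. T i j = 0 \<longleftrightarrow> K i j = 0) \<and>
     0 \<le> a \<and> a \<le> 1"

definition limit_set :: "(real ^ 'd \<Rightarrow> real ^ 'd) \<Rightarrow> (real ^ 'd) set" where
  "limit_set F = {x \<in> unit_cube. \<exists>y \<in> unit_cube. \<exists>t :: nat \<Rightarrow> nat.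
      strict_mono t \<and> (\<lambda>n. (F ^^ t n) y) \<longlonglongrightarrow> x}"

definition discontinuity_set :: "('d::finite \<Rightarrow> 'd \<Rightarrow> real) \<Rightarrow> (real ^ 'd) set" where
  "discontinuity_set T = {x \<in> unit_cube. \<exists>i k. x $ i = T i k}"

end

theory Submission
  imports Defs "HOL-Library.Infinite_Set"
begin

definition pat :: "('d::finite \<Rightarrow> 'd \<Rightarrow> int) \<Rightarrow> ('d \<Rightarrow> 'd \<Rightarrow> real) \<Rightarrow> real^'d \<Rightarrow> 'd \<Rightarrow> 'd \<Rightarrow> real" where
  "pat s T u = (\<lambda>i j. heav (of_int (s i j) * (u$i - T i j)))"

lemma drn_pat: "drn_map K s T a u $ j = a * u$j + (1-a) * (\<Sum>i\<in>UNIV. K i j * pat s T u i j)"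
  by (simp add: drn_map_def pat_def)

lemma pat_range: "pat s T u \<in> {b. \<forall>i j. b i j \<in> {0,1}}"
  by (auto simp: pat_def heav_def)

lemma finite_P: "finite {b::'d::finite \<Rightarrow> 'd \<Rightarrow> real. \<forall>i j. b i j \<in> {0,1}}"
proof -
  have "{b::'d::finite \<Rightarrow> 'd \<Rightarrow> real. \<forall>i j. b i j \<in> {0,1}} = Pi\<^sub>E UNIV (\<lambda>_. Pi\<^sub>E UNIV (\<lambda>_. {0,1}))"
    by (auto simp: PiE_UNIV_domain)
  then show ?thesis by (simp add: finite_PiE)
qed

lemma pat_eq:
  assumes vp: "valid_params K s T a"
    and g: "\<forall>i k. r \<le> \<bar>u$i - T i k\<bar>" and c: "\<forall>i. \<bar>u$i - v$i\<bar> < r"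
  shows "pat s T u = pat s T v"
proof (intro ext)
  fix i j
  have s: "s i j \<in> {-1,0,1}" using vp unfolding valid_params_def by blast
  have "r \<le> \<bar>u$i - T i j\<bar>" "\<bar>u$i - v$i\<bar> < r" using g c by auto
  then have "(u$i - T i j > 0 \<and> v$i - T i j > 0) \<or> (u$i - T i j < 0 \<and> v$i - T i j < 0)"
    by linarith
  then show "pat s T u i j = pat s T v i j"
    using s by (auto simp: pat_def heav_def)
qed

lemma step_diff:
  "pat s T u = pat s T v \<Longrightarrow> drn_map K s T a u $ j - drn_map K s T a v $ j = a * (u$j - v$j)"
  by (simp add: drn_pat algebra_simps)

lemma iter_diff:
  "(\<forall>i<k. pat s T ((drn_map K s T a ^^ i) u) = pat s T ((drn_map K s T a ^^ i) v)) \<Longrightarrow>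
   (drn_map K s T a ^^ k) u $ j - (drn_map K s T a ^^ k) v $ j = a^k * (u$j - v$j)"
proof (induction k)
  case 0
  then show ?case by simp
next
  case (Suc k)
  then have "(drn_map K s T a ^^ k) u $ j - (drn_map K s T a ^^ k) v $ j = a^k * (u$j - v$j)"
    by auto
  moreover have "pat s T ((drn_map K s T a ^^ k) u) = pat s T ((drn_map K s T a ^^ k) v)"
    using Suc.prems by auto
  ultimately show ?case
    using step_diff[of s T "(drn_map K s T a ^^ k) u" "(drn_map K s T a ^^ k) v" K a j]
    by simp
qed

lemma cube_closed:
  assumes vp: "valid_params K s T a" and u: "u \<in> unit_cube"
  shows "drn_map K s T a u \<in> unit_cube"
proof -
  have a: "0 \<le> a" "a \<le> 1" using vp by (auto simp: valid_params_def)
  { fix j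
    have K: "\<And>i. 0 \<le> K i j" using vp by (auto simp: valid_params_def)
    have Ks: "(\<Sum>i\<in>UNIV. K i j) = 1" using vp by (auto simp: valid_params_def)
    have p: "\<And>i. 0 \<le> pat s T u i j \<and> pat s T u i j \<le> 1" by (auto simp: pat_def heav_def)
    define c where "c = (\<Sum>i\<in>UNIV. K i j * pat s T u i j)"
    have c0: "0 \<le> c" unfolding c_def using K p by (intro sum_nonneg) auto
    have "c \<le> (\<Sum>i\<in>UNIV. K i j)" unfolding c_def
      using K p by (intro sum_mono) (simp add: mult_left_le)
    then have c1: "c \<le> 1" using Ks by simp
    have u0: "0 \<le> u$j" "u$j \<le> 1" using u by (auto simp: unit_cube_def)
    have "a * u$j \<le> a" using a u0 by (simp add: mult_left_le)
    moreover have "(1-a) * c \<le> 1 - a" using a c1 by (simp add: mult_left_le)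
    moreover have "0 \<le> a * u$j" "0 \<le> (1-a)*c" using a u0 c0 by auto
    ultimately have "0 \<le> drn_map K s T a u $ j \<and> drn_map K s T a u $ j \<le> 1"
      by (simp add: drn_pat c_def[symmetric])
  }
  then show ?thesis by (simp add: unit_cube_def)
qed

lemma iter_cube:
  assumes vp: "valid_params K s T a" and u: "u \<in> unit_cube"
  shows "(drn_map K s T a ^^ n) u \<in> unit_cube"
  by (induction n) (auto simp: u cube_closed[OF vp])

lemma unit_cube_cbox: "unit_cube = cbox 0 (1::real^'d::finite)"
  by (auto simp: unit_cube_def mem_box_cart)

lemma good_lim:
  assumes vp: "valid_params K s T a"
    and H: "\<forall>x\<in>limit_set (drn_map K s T a). \<forall>z\<in>discontinuity_set T. e \<le> dist x z"
    and x: "x \<in> limit_set (drn_map K s T a)"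
  shows "e \<le> \<bar>x$i - T i k\<bar>"
proof -
  define w where "w = (\<chi> j. if j = i then T i k else x$j)"
  have xc: "x \<in> unit_cube" using x by (simp add: limit_set_def)
  have "w \<in> unit_cube" using xc vp by (auto simp: w_def unit_cube_def valid_params_def)
  then have "w \<in> discontinuity_set T" unfolding discontinuity_set_def
    by (auto simp: w_def)
  then have "e \<le> dist x w" using H x by auto
  also have "\<dots> = norm (x - w)" by (simp add: dist_norm)
  also have "\<dots> \<le> (\<Sum>j\<in>UNIV. \<bar>(x - w)$j\<bar>)" by (rule norm_le_l1_cart)
  also have "(\<Sum>j\<in>UNIV. \<bar>(x - w)$j\<bar>) = (\<Sum>j\<in>UNIV. if j = i then \<bar>x$i - T i k\<bar> else 0)"
    by (intro sum.cong) (auto simp: w_def)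
  also have "\<dots> = \<bar>x$i - T i k\<bar>" by simp
  finally show ?thesis .
qed

theorem mainTheorem4:
  fixes K :: "'d::finite \<Rightarrow> 'd \<Rightarrow> real" and s :: "'d \<Rightarrow> 'd \<Rightarrow> int"
    and T :: "'d \<Rightarrow> 'd \<Rightarrow> real" and a :: real
  assumes "valid_params K s T a"
    and "\<exists>\<epsilon>>0. \<forall>x\<in>limit_set (drn_map K s T a). \<forall>z\<in>discontinuity_set T. \<epsilon> \<le> dist x z"
  shows "finite (limit_set (drn_map K s T a))"
proof -
  note vp = assms(1)
  obtain e where e0: "e > 0" and H: "\<forall>x\<in>limit_set (drn_map K s T a). \<forall>z\<in>discontinuity_set T. e \<le> dist x z"
    using assms(2) by blast
  define F where "F = drn_map K s T a"
  define L where "L = limit_set F"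
  have a0: "0 \<le> a" using vp by (simp add: valid_params_def)
  have iter: "\<And>k u v j. (\<forall>i<k. pat s T ((F ^^ i) u) = pat s T ((F ^^ i) v)) \<Longrightarrow>
      (F ^^ k) u $ j - (F ^^ k) v $ j = a^k * (u$j - v$j)"
    unfolding F_def by (rule iter_diff)
  have good: "\<And>x i k. x \<in> L \<Longrightarrow> e \<le> \<bar>x$i - T i k\<bar>"
    unfolding L_def F_def using good_lim[OF vp H] by blast
  have Fc: "\<And>u n. u \<in> unit_cube \<Longrightarrow> (F ^^ n) u \<in> unit_cube"
    unfolding F_def using iter_cube[OF vp] by blast
  have a1: "a < 1"
  proof (rule ccontr)
    assume "\<not> a < 1"
    then have "a = 1" using vp by (simp add: valid_params_def)
    then have Fid: "F = id" by (auto simp: F_def drn_map_def vec_eq_iff)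
    define i0 where "i0 = (undefined :: 'd)"
    define y :: "real^'d" where "y = (\<chi> j. T i0 i0)"
    have yc: "y \<in> unit_cube" using vp by (simp add: y_def unit_cube_def valid_params_def)
    have sm: "strict_mono (id :: nat \<Rightarrow> nat)" by (simp add: strict_mono_def)
    have "(\<lambda>n. (F ^^ id n) y) \<longlonglongrightarrow> y" by (simp add: Fid)
    then have "y \<in> L" unfolding L_def limit_set_def using yc sm by blast
    then show False using good[of y i0 i0] e0 by (simp add: y_def)
  qed
  define r where "r = e / 2"
  have r0: "r > 0" using e0 by (simp add: r_def)
  define P where "P = {b::'d \<Rightarrow> 'd \<Rightarrow> real. \<forall>i j. b i j \<in> {0,1}}"
  have finP: "finite P" unfolding P_def by (rule finite_P)
  have patP: "\<And>u. pat s T u \<in> P" unfolding P_def by (rule pat_range)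
  obtain m where am: "a^m < r" using real_arch_pow_inv[OF r0 a1] by blast
  define WS where "WS = Pi\<^sub>E {..<m} (\<lambda>_. P)"
  have finWS: "finite WS" unfolding WS_def using finP by (simp add: finite_PiE)
  define Q where "Q = card WS"
  have per: "\<exists>p\<in>{1..Q}. (F ^^ p) x = x" if xL: "x \<in> L" for x
  proof -
    obtain y t where yc: "y \<in> unit_cube" and t: "strict_mono t"
      and lim: "(\<lambda>n. (F ^^ t n) y) \<longlonglongrightarrow> x"
      using xL unfolding L_def limit_set_def by blast
    define z where "z n = (F ^^ n) y" for n
    have zc: "\<And>n. z n \<in> unit_cube" unfolding z_def using Fc yc by blast
    have zadd: "z (n + k) = (F ^^ k) (z n)" for n k
    proof -
      have "(F ^^ (k + n)) y = (F ^^ k) ((F ^^ n) y)" by (simp add: funpow_add)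
      then show ?thesis unfolding z_def by (simp add: add.commute)
    qed
    have zdiff1: "\<bar>z n $ j - z n' $ j\<bar> \<le> 1" for n n' j
    proof -
      have "0 \<le> z n $ j" "z n $ j \<le> 1" "0 \<le> z n' $ j" "z n' $ j \<le> 1"
        using zc[of n] zc[of n'] unfolding unit_cube_def by auto
      then show ?thesis by linarith
    qed
    have evgood: "\<exists>N. \<forall>n\<ge>N. \<forall>i k. r \<le> \<bar>z n $ i - T i k\<bar>"
    proof (rule ccontr)
      assume nN: "\<not> ?thesis"
      define B where "B = {n. \<exists>i k. \<bar>z n $ i - T i k\<bar> < r}"
      have "infinite B" unfolding infinite_nat_iff_unbounded_le B_def
        using nN by (auto simp: not_le)
      then obtain \<sigma> :: "nat \<Rightarrow> nat" where \<sigma>: "strict_mono \<sigma>" "\<And>n. \<sigma> n \<in> B"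
        using infinite_enumerate by blast
      have sc: "seq_compact (unit_cube :: (real^'d) set)"
        unfolding unit_cube_cbox by (intro compact_imp_seq_compact compact_cbox)
      obtain l f where l: "l \<in> unit_cube" and f: "strict_mono (f :: nat \<Rightarrow> nat)"
        and lf: "((z \<circ> \<sigma>) \<circ> f) \<longlonglongrightarrow> l"
        using seq_compactE[OF sc, of "z \<circ> \<sigma>"] zc by auto
      have sm: "strict_mono (\<sigma> \<circ> f)" using \<sigma>(1) f by (rule strict_mono_o)
      have "(\<lambda>n. (F ^^ (\<sigma> \<circ> f) n) y) \<longlonglongrightarrow> l" using lf by (simp add: z_def o_def)
      then have "l \<in> L" unfolding L_def limit_set_def using l yc sm by blast
      then have gl: "\<And>i k. e \<le> \<bar>l$i - T i k\<bar>" using good by blast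
      have "\<forall>\<^sub>F n in sequentially. \<forall>i. \<bar>z (\<sigma> (f n)) $ i - l $ i\<bar> < r"
      proof (intro eventually_all_finite allI)
        fix i
        have "(\<lambda>n. z (\<sigma> (f n)) $ i) \<longlonglongrightarrow> l $ i"
          using tendsto_vec_nth[OF lf] by (simp add: o_def)
        then have "\<forall>\<^sub>F n in sequentially. dist (z (\<sigma> (f n)) $ i) (l $ i) < r"
          using r0 tendstoD by blast
        then show "\<forall>\<^sub>F n in sequentially. \<bar>z (\<sigma> (f n)) $ i - l $ i\<bar> < r"
          by (simp add: dist_real_def)
      qed
      then obtain n where n: "\<And>i. \<bar>z (\<sigma> (f n)) $ i - l $ i\<bar> < r"
        unfolding eventually_sequentially by blast
      obtain i k where "\<bar>z (\<sigma> (f n)) $ i - T i k\<bar> < r" using \<sigma>(2)[of "f n"] by (auto simp: B_def)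
      moreover have "e \<le> \<bar>l$i - T i k\<bar>" by (rule gl)
      moreover have "\<bar>z (\<sigma> (f n)) $ i - l $ i\<bar> < r" by (rule n)
      ultimately show False unfolding r_def by linarith
    qed
    then obtain N where N: "\<And>n i k. n \<ge> N \<Longrightarrow> r \<le> \<bar>z n $ i - T i k\<bar>" by blast
    define W where "W n = restrict (\<lambda>i. pat s T (z (n + i))) {..<m}" for n
    have WWS: "W n \<in> WS" for n unfolding W_def WS_def using patP by auto
    have "card (W ` {N..N+Q}) \<le> Q"
      unfolding Q_def using WWS finWS by (intro card_mono) auto
    then have "card {N..N+Q} > card (W ` {N..N+Q})" by simp
    then have "\<not> inj_on W {N..N+Q}" by (rule pigeonhole)
    then obtain n1 n2 where n12: "n1 \<in> {N..N+Q}" "n2 \<in> {N..N+Q}" "n1 \<noteq> n2" "W n1 = W n2"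
      unfolding inj_on_def by blast
    obtain n n' where nn: "N \<le> n" "n < n'" "n' \<le> N + Q" "W n = W n'"
    proof (cases "n1 < n2")
      case True then show ?thesis using n12 that[of n1 n2] by auto
    next
      case False then show ?thesis using n12 that[of n2 n1] by auto
    qed
    define p where "p = n' - n"
    have p: "p \<in> {1..Q}" using nn by (auto simp: p_def)
    have agree: "pat s T (z (n + i)) = pat s T (z (n' + i))" for i
    proof (induction i rule: less_induct)
      case (less i)
      show ?case
      proof (cases "i < m")
        case True
        then show ?thesis using fun_cong[OF nn(4), of i] by (simp add: W_def)
      next
        case False
        define q where "q = i - m"
        have iq: "i = q + m" using False by (simp add: q_def)
        have ag: "\<forall>i'<m. pat s T ((F ^^ i') (z (n + q))) = pat s T ((F ^^ i') (z (n' + q)))"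
        proof (intro allI impI)
          fix i' assume "i' < m"
          then have "q + i' < i" using iq by simp
          then show "pat s T ((F ^^ i') (z (n + q))) = pat s T ((F ^^ i') (z (n' + q)))"
            using less.IH[of "q + i'"] by (simp add: zadd[symmetric] add.assoc)
        qed
        have "\<forall>j. \<bar>z (n + i) $ j - z (n' + i) $ j\<bar> < r"
        proof
          fix j
          have "z (n + i) $ j - z (n' + i) $ j = a^m * (z (n + q) $ j - z (n' + q) $ j)"
            using iter[OF ag, of j] by (simp add: zadd[symmetric] iq add.assoc)
          then have "\<bar>z (n + i) $ j - z (n' + i) $ j\<bar> = a^m * \<bar>z (n + q) $ j - z (n' + q) $ j\<bar>"
            using a0 by (simp add: abs_mult)
          also have "\<dots> \<le> a^m" using zdiff1 a0 by (simp add: mult_left_le)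
          finally show "\<bar>z (n + i) $ j - z (n' + i) $ j\<bar> < r" using am by linarith
        qed
        then show ?thesis
          using pat_eq[OF vp, of r "z (n + i)" "z (n' + i)"] N[of "n + i"] nn(1) by auto
      qed
    qed
    have decay: "z (n' + k) $ j - z (n + k) $ j = a^k * (z n' $ j - z n $ j)" for k j
    proof -
      have "\<forall>i<k. pat s T ((F ^^ i) (z n')) = pat s T ((F ^^ i) (z n))"
        using agree by (simp add: zadd[symmetric])
      from iter[OF this, of j] show ?thesis by (simp add: zadd[symmetric])
    qed
    have xlim: "\<And>j. (\<lambda>l. z (t l) $ j) \<longlonglongrightarrow> x $ j"
      using tendsto_vec_nth[OF lim] by (simp add: z_def)
    have "(F ^^ p) x $ j = x $ j" for j
    proof (rule ccontr)
      assume ne: "(F ^^ p) x $ j \<noteq> x $ j"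
      define \<delta> where "\<delta> = \<bar>(F ^^ p) x $ j - x $ j\<bar>"
      have d0: "\<delta> > 0" using ne by (simp add: \<delta>_def)
      obtain M where aM: "a^M < \<delta>/2" using real_arch_pow_inv[of "\<delta>/2" a] d0 a1 by auto
      have mr: "0 < min r (\<delta>/4)" using r0 d0 by simp
      have ev1: "\<forall>\<^sub>F l in sequentially. \<forall>j'. \<bar>z (t l) $ j' - x $ j'\<bar> < min r (\<delta>/4)"
      proof (intro eventually_all_finite allI)
        fix j'
        have "\<forall>\<^sub>F l in sequentially. dist (z (t l) $ j') (x $ j') < min r (\<delta>/4)"
          using xlim[of j'] tendstoD mr by blast
        then show "\<forall>\<^sub>F l in sequentially. \<bar>z (t l) $ j' - x $ j'\<bar> < min r (\<delta>/4)"
          by (simp add: dist_real_def)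
      qed
      have ev2: "\<forall>\<^sub>F l in sequentially. M + n \<le> l" by (rule eventually_ge_at_top)
      obtain l where l1: "\<And>j'. \<bar>z (t l) $ j' - x $ j'\<bar> < min r (\<delta>/4)" and l2: "M + n \<le> l"
        using eventually_conj[OF ev1 ev2] unfolding eventually_sequentially by blast
      have tl: "l \<le> t l" using t by (simp add: seq_suble)
      have agx: "pat s T ((F ^^ i) x) = pat s T (z (t l + i))" for i
      proof (induction i rule: less_induct)
        case (less i)
        have ag: "\<forall>i'<i. pat s T ((F ^^ i') (z (t l))) = pat s T ((F ^^ i') x)"
          using less.IH by (simp add: zadd[symmetric])
        have "\<forall>j'. \<bar>z (t l + i) $ j' - (F ^^ i) x $ j'\<bar> < r"
        proof
          fix j'
          have "z (t l + i) $ j' - (F ^^ i) x $ j' = a^i * (z (t l) $ j' - x $ j')"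
            using iter[OF ag, of j'] by (simp add: zadd[symmetric])
          then have "\<bar>z (t l + i) $ j' - (F ^^ i) x $ j'\<bar> = a^i * \<bar>z (t l) $ j' - x $ j'\<bar>"
            using a0 by (simp add: abs_mult)
          also have "\<dots> \<le> \<bar>z (t l) $ j' - x $ j'\<bar>"
            using a0 a1 by (simp add: mult_left_le_one_le power_le_one)
          finally show "\<bar>z (t l + i) $ j' - (F ^^ i) x $ j'\<bar> < r" using l1[of j'] by linarith
        qed
        then show ?case
          using pat_eq[OF vp, of r "z (t l + i)" "(F ^^ i) x"] N[of "t l + i"] nn(1) l2 tl by auto
      qed
      have e1: "z (t l + p) $ j - (F ^^ p) x $ j = a^p * (z (t l) $ j - x $ j)"
        using iter[of p "z (t l)" x j] agx by (simp add: zadd[symmetric])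
      have tln: "t l + p = n' + (t l - n)" "t l = n + (t l - n)" using l2 tl nn(2) by (auto simp: p_def)
      have e2: "z (t l + p) $ j - z (t l) $ j = a^(t l - n) * (z n' $ j - z n $ j)"
        using decay[of "t l - n" j] by (simp only: tln(1)[symmetric] tln(2)[symmetric])
      have b1: "\<bar>a^(t l - n) * (z n' $ j - z n $ j)\<bar> \<le> a^M"
      proof -
        have "\<bar>a^(t l - n) * (z n' $ j - z n $ j)\<bar> = a^(t l - n) * \<bar>z n' $ j - z n $ j\<bar>"
          using a0 by (simp add: abs_mult)
        also have "\<dots> \<le> a^(t l - n)" using zdiff1 a0 by (simp add: mult_left_le)
        also have "\<dots> \<le> a^M" using a0 a1 l2 tl by (intro power_decreasing) auto
        finally show ?thesis .
      qed
      have b2: "\<bar>a^p * (z (t l) $ j - x $ j)\<bar> \<le> \<bar>z (t l) $ j - x $ j\<bar>"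
        using a0 a1 by (simp add: abs_mult mult_left_le_one_le power_le_one)
      have "(F ^^ p) x $ j - x $ j
          = a^(t l - n) * (z n' $ j - z n $ j) + (z (t l) $ j - x $ j) - a^p * (z (t l) $ j - x $ j)"
        using e1 e2 by linarith
      then have "\<delta> \<le> a^M + \<bar>z (t l) $ j - x $ j\<bar> + \<bar>z (t l) $ j - x $ j\<bar>" 
        unfolding \<delta>_def using b1 b2 by linarith
      moreover have "\<bar>z (t l) $ j - x $ j\<bar> < \<delta>/4" using l1[of j] by simp
      ultimately show False using aM by linarith
    qed
    then have "(F ^^ p) x = x" by (simp add: vec_eq_iff)
    then show ?thesis using p by blast
  qed
  have finfix: "finite {x. (F ^^ p) x = x}" if p1: "1 \<le> p" for p
  proof -
    define G where "G x = restrict (\<lambda>i. pat s T ((F ^^ i) x)) {..<p}" for x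
    have "inj_on G {x. (F ^^ p) x = x}"
    proof (rule inj_onI)
      fix x x' assume x: "x \<in> {x. (F ^^ p) x = x}" and x': "x' \<in> {x. (F ^^ p) x = x}"
        and G: "G x = G x'"
      have ag: "\<forall>i<p. pat s T ((F ^^ i) x) = pat s T ((F ^^ i) x')"
      proof (intro allI impI)
        fix i assume "i < p"
        then show "pat s T ((F ^^ i) x) = pat s T ((F ^^ i) x')"
          using fun_cong[OF G, of i] by (simp add: G_def)
      qed
      have ap: "a^p < 1" using a0 a1 p1 by (simp add: power_less_one_iff)
      show "x = x'"
      proof (subst vec_eq_iff, intro allI)
        fix j
        have "x $ j - x' $ j = a^p * (x $ j - x' $ j)"
          using iter[OF ag, of j] x x' by simp
        then have "(1 - a^p) * (x $ j - x' $ j) = 0" by (simp add: algebra_simps)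
        then show "x $ j = x' $ j" using ap by simp
      qed
    qed
    moreover have "G ` {x. (F ^^ p) x = x} \<subseteq> Pi\<^sub>E {..<p} (\<lambda>_. P)"
      unfolding G_def using patP by auto
    then have "finite (G ` {x. (F ^^ p) x = x})"
      using finP by (meson finite_PiE finite_lessThan finite_subset)
    ultimately show ?thesis using finite_imageD by blast
  qed
  have "L \<subseteq> (\<Union>p\<in>{1..Q}. {x. (F ^^ p) x = x})" using per by blast
  moreover have "finite (\<Union>p\<in>{1..Q}. {x. (F ^^ p) x = x})"
    using finfix by auto
  ultimately have "finite L" by (rule finite_subset)
  then show ?thesis by (simp add: L_def F_def)
qed

end
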